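(* Let $(G_n)_{n\in\mathbb N}$ be a sequence of topological groups, each metrized by a left-invariant distance $d_n$ inducing its topology, and let $p\in[1,\infty)$. Then $\ell_p((G_n)_n):=\{(x_n)_n: x_n\in G_n,\ \sum_n d_n(x_n,e_{G_n})^p<\infty\}$, with componentwise multiplication $(x_n)_n\cdot(y_n)_n=(x_ny_n)_n$ and the distance $d((x_n)_n,(y_n)_n)=\big(\sum_n d_n(x_n,y_n)^p\big)^{1/p}$, is a topological group. *)

theory Defs
  imports "HOL-Analysis.Analysis" "HOL-Algebra.Group"
begin

definition topological_group :: "('a, 'b) monoid_scheme \<Rightarrow> 'a topology \<Rightarrow> bool" where
  "topological_group G T \<longleftrightarrow>
     group G \<and> topspace T = carrier G \<and>
     continuous_map (prod_topology T T) T (\<lambda>(x, y). x \<otimes>\<^bsub>G\<^esub> y) \<and>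
     continuous_map T T (\<lambda>x. inv\<^bsub>G\<^esub> x)"

definition left_invariant :: "('a, 'b) monoid_scheme \<Rightarrow> ('a \<Rightarrow> 'a \<Rightarrow> real) \<Rightarrow> bool" where
  "left_invariant G d \<longleftrightarrow>
     (\<forall>x\<in>carrier G. \<forall>y\<in>carrier G. \<forall>z\<in>carrier G. d (z \<otimes>\<^bsub>G\<^esub> x) (z \<otimes>\<^bsub>G\<^esub> y) = d x y)"

definition lp_carrier :: "(nat \<Rightarrow> ('a, 'b) monoid_scheme) \<Rightarrow> (nat \<Rightarrow> 'a \<Rightarrow> 'a \<Rightarrow> real) \<Rightarrow> real
    \<Rightarrow> (nat \<Rightarrow> 'a) set" where
  "lp_carrier G d p = {x. (\<forall>n. x n \<in> carrier (G n)) \<and>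
                          summable (\<lambda>n. d n (x n) \<one>\<^bsub>G n\<^esub> powr p)}"

definition lp_group :: "(nat \<Rightarrow> ('a, 'b) monoid_scheme) \<Rightarrow> (nat \<Rightarrow> 'a \<Rightarrow> 'a \<Rightarrow> real) \<Rightarrow> real
    \<Rightarrow> (nat \<Rightarrow> 'a) monoid" where
  "lp_group G d p = \<lparr> carrier = lp_carrier G d p,
                      mult = (\<lambda>x y n. x n \<otimes>\<^bsub>G n\<^esub> y n),
                      one = (\<lambda>n. \<one>\<^bsub>G n\<^esub>) \<rparr>"

definition lp_dist :: "(nat \<Rightarrow> 'a \<Rightarrow> 'a \<Rightarrow> real) \<Rightarrow> real \<Rightarrow> (nat \<Rightarrow> 'a) \<Rightarrow> (nat \<Rightarrow> 'a) \<Rightarrow> real" where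
  "lp_dist d p x y = (\<Sum>n. d n (x n) (y n) powr p) powr (1 / p)"

end

theory Submission
  imports Defs
begin


lemma convex_powr0:
  fixes p u v a b :: real
  assumes p: "1 \<le> p" and uv: "0\<le>u" "0\<le>v" "u+v=1" and ab: "0\<le>a" "0\<le>b"
  shows "(u * a + v * b) powr p \<le> u * (a powr p) + v * (b powr p)"
proof -
  have aux: "(w*c) powr p \<le> w * c powr p" if "0\<le>w" "w\<le>1" "0\<le>c" for w c :: real
  proof (cases "w = 0")
    case False
    hence "w powr p \<le> w powr 1" using that p by (intro powr_mono') auto
    hence "w powr p \<le> w" using that by simp
    thus ?thesis using that by (simp add: powr_mult mult_right_mono)
  qed simp
  show ?thesis
  proof (cases "a = 0 \<or> b = 0")
    case True
    thus ?thesis using aux[of u a] aux[of v b] uv ab by auto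
  next
    case False
    hence "a > 0" "b > 0" using ab by auto
    have u: "u = 1 - v" using uv by simp
    from convex_onD[OF powr_convex[OF p], of v a b] \<open>a>0\<close> \<open>b>0\<close> uv
    show ?thesis unfolding u by (simp add: algebra_simps)
  qed
qed

definition pn :: "real \<Rightarrow> (nat \<Rightarrow> real) \<Rightarrow> real" where
  "pn p a = (\<Sum>n. a n powr p) powr (1/p)"

lemma lp_mono:
  fixes a b :: "nat \<Rightarrow> real"
  assumes p: "1 \<le> p" and "\<And>n. 0 \<le> a n" "\<And>n. a n \<le> b n" "summable (\<lambda>n. b n powr p)"
  shows "summable (\<lambda>n. a n powr p) \<and> pn p a \<le> pn p b"
proof -
  have le: "a n powr p \<le> b n powr p" for n using assms p by (intro powr_mono2) auto
  have s: "summable (\<lambda>n. a n powr p)"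
    by (rule summable_comparison_test'[OF assms(4), of 0]) (use le in auto)
  have "(\<Sum>n. a n powr p) \<le> (\<Sum>n. b n powr p)" by (rule suminf_le[OF le s assms(4)])
  moreover have "0 \<le> (\<Sum>n. a n powr p)" by (rule suminf_nonneg[OF s]) auto
  ultimately show ?thesis using s p unfolding pn_def by (auto intro: powr_mono2)
qed

lemma pn_pow: assumes p: "1 \<le> p" and s: "summable (\<lambda>n. a n powr p)"
  shows "pn p a powr p = (\<Sum>n. a n powr p)"
proof -
  have "0 \<le> (\<Sum>n. a n powr p)" by (rule suminf_nonneg[OF s]) auto
  thus ?thesis using p unfolding pn_def by (simp add: powr_powr)
qed

lemma pn_nonneg: "0 \<le> pn p a" unfolding pn_def by simp

lemma pn_zero: assumes p: "1 \<le> p" and s: "summable (\<lambda>n. a n powr p)" and nn: "\<And>n. 0 \<le> a n"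
  shows "pn p a = 0 \<longleftrightarrow> (\<forall>n. a n = 0)"
proof -
  have "pn p a = 0 \<longleftrightarrow> (\<Sum>n. a n powr p) = 0" unfolding pn_def by simp
  also have "\<dots> \<longleftrightarrow> (\<forall>n. a n powr p = 0)" by (rule suminf_eq_zero_iff[OF s]) auto
  also have "\<dots> \<longleftrightarrow> (\<forall>n. a n = 0)" by simp
  finally show ?thesis .
qed

lemma minkowski:
  fixes a b :: "nat \<Rightarrow> real"
  assumes p: "1 \<le> p" and nn: "\<And>n. 0 \<le> a n" "\<And>n. 0 \<le> b n"
    and sa: "summable (\<lambda>n. a n powr p)" and sb: "summable (\<lambda>n. b n powr p)"
  shows "summable (\<lambda>n. (a n + b n) powr p) \<and> pn p (\<lambda>n. a n + b n) \<le> pn p a + pn p b"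
proof (cases "pn p a = 0 \<or> pn p b = 0")
  case True
  then show ?thesis
  proof
    assume "pn p a = 0"
    hence "\<forall>n. a n = 0" using pn_zero[OF p sa nn(1)] by simp
    thus ?thesis using sb by (simp add: pn_nonneg)
  next
    assume "pn p b = 0"
    hence "\<forall>n. b n = 0" using pn_zero[OF p sb nn(2)] by simp
    thus ?thesis using sa by (simp add: pn_nonneg)
  qed
next
  case False
  define A where "A = pn p a"
  define B where "B = pn p b"
  have A: "A > 0" "B > 0" using False pn_nonneg[of p a] pn_nonneg[of p b] unfolding A_def B_def by linarith+
  define S where "S = A + B"
  have S: "S > 0" using A S_def by simp
  have Ap: "A powr p = (\<Sum>n. a n powr p)" using pn_pow[OF p sa] A_def by simp
  have Bp: "B powr p = (\<Sum>n. b n powr p)" using pn_pow[OF p sb] B_def by simp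
  define g where "g n = S powr p * ((A/S) * (a n powr p / A powr p) + (B/S) * (b n powr p / B powr p))" for n
  have w: "A/S + B/S = 1" using S S_def by (simp add: add_divide_distrib[symmetric])
  have le: "(a n + b n) powr p \<le> g n" for n
  proof -
    have e1: "(A/S) * (a n / A) + (B/S) * (b n / B) = (a n + b n) / S"
      using A S by (simp add: field_simps)
    have eq: "a n + b n = S * ((A/S) * (a n / A) + (B/S) * (b n / B))"
      unfolding e1 using S by simp
    have "(a n + b n) powr p = S powr p * ((A/S) * (a n / A) + (B/S) * (b n / B)) powr p"
      unfolding eq using S A nn by (subst powr_mult) auto
    also have "\<dots> \<le> S powr p * ((A/S) * (a n / A) powr p + (B/S) * (b n / B) powr p)"
      using A S w nn by (intro mult_left_mono convex_powr0 p) auto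
    also have "\<dots> = g n" unfolding g_def using A nn by (simp add: powr_divide)
    finally show ?thesis .
  qed
  have gs: "g sums (S powr p * ((A/S) * ((\<Sum>n. a n powr p) / A powr p) + (B/S) * ((\<Sum>n. b n powr p) / B powr p)))"
    unfolding g_def by (intro sums_mult sums_add sums_divide summable_sums sa sb)
  have sg: "summable g" using gs by (rule sums_summable)
  have ss: "summable (\<lambda>n. (a n + b n) powr p)"
    by (rule summable_comparison_test'[OF sg, of 0]) (use le in auto)
  have "suminf g = S powr p * ((A/S) * ((\<Sum>n. a n powr p) / A powr p) + (B/S) * ((\<Sum>n. b n powr p) / B powr p))"
    using gs by (rule sums_unique[symmetric])
  also have "\<dots> = S powr p * (A/S + B/S)" using A unfolding Ap[symmetric] Bp[symmetric] by simp
  also have "\<dots> = S powr p" using w by simp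
  finally have gS: "suminf g = S powr p" .
  have "(\<Sum>n. (a n + b n) powr p) \<le> S powr p" using suminf_le[OF le ss sg] gS by simp
  hence "pn p (\<lambda>n. a n + b n) \<le> (S powr p) powr (1/p)"
    unfolding pn_def using p by (intro powr_mono2) (auto intro!: suminf_nonneg[OF ss])
  also have "\<dots> = S" using S p by (simp add: powr_powr)
  finally show ?thesis using ss S_def A_def B_def by simp
qed

lemma term_le_pn: assumes p: "1 \<le> p" and nn: "\<And>n. 0 \<le> a n" and s: "summable (\<lambda>n. a n powr p)"
  shows "a n \<le> pn p a"
proof -
  have "sum (\<lambda>n. a n powr p) {n} \<le> (\<Sum>n. a n powr p)" by (rule sum_le_suminf[OF s]) auto
  hence "a n powr p \<le> (\<Sum>n. a n powr p)" by simp
  hence "(a n powr p) powr (1/p) \<le> pn p a" unfolding pn_def using p by (intro powr_mono2) auto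
  thus ?thesis using p nn[of n] by (simp add: powr_powr)
qed

lemma lp_cont_generic:
  fixes s u :: "'x \<Rightarrow> nat \<Rightarrow> real" and t :: "nat \<Rightarrow> real"
  assumes p: "1 \<le> p" and t: "\<And>n. 0 \<le> t n" "summable (\<lambda>n. t n powr p)" and e: "\<epsilon> > 0"
   and snn: "\<And>y n. y\<in>X \<Longrightarrow> 0 \<le> s y n" and unn: "\<And>y n. y\<in>X \<Longrightarrow> 0 \<le> u y n"
   and ss: "\<And>y. y\<in>X \<Longrightarrow> summable (\<lambda>n. s y n powr p)"
   and loc: "\<And>n \<eta>. \<eta> > 0 \<Longrightarrow> \<exists>\<delta>>0. \<forall>y\<in>X. s y n < \<delta> \<longrightarrow> u y n < \<eta>"
   and tl: "\<And>y n. y\<in>X \<Longrightarrow> u y n \<le> 2 * t n + s y n"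
  shows "\<exists>\<delta>>0. \<forall>y\<in>X. pn p (s y) < \<delta> \<longrightarrow> pn p (u y) < \<epsilon>"
proof -
  define r where "r = (\<epsilon>/8) powr p"
  have r: "r > 0" using e unfolding r_def by simp
  obtain N where N: "\<forall>n\<ge>N. norm (\<Sum>i. t (i + n) powr p) < r"
    using suminf_exist_split[OF r t(2)] by blast
  define tN where "tN n = (if N \<le> n then t n else 0)" for n
  have tNnn: "0 \<le> tN n" for n using t unfolding tN_def by simp
  have tNs: "summable (\<lambda>n. tN n powr p)"
    using lp_mono[OF p tNnn, where b=t] t unfolding tN_def by auto
  have "(\<Sum>n. tN n powr p) = (\<Sum>i. tN (i + N) powr p) + (\<Sum>i<N. tN i powr p)"
    by (rule suminf_split_initial_segment[OF tNs])
  also have "\<dots> = (\<Sum>i. t (i + N) powr p)" unfolding tN_def by simp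
  also have "\<dots> < r" using N by auto
  finally have "(\<Sum>n. tN n powr p) < r" .
  hence tNe: "pn p tN < \<epsilon>/8"
  proof -
    assume "(\<Sum>n. tN n powr p) < r"
    hence "pn p tN < r powr (1/p)" unfolding pn_def using p
      by (intro powr_less_mono2) (auto intro!: suminf_nonneg tNs)
    also have "r powr (1/p) = \<epsilon>/8" unfolding r_def using e p by (simp add: powr_powr)
    finally show ?thesis .
  qed
  define \<eta> where "\<eta> = \<epsilon> / (4 * (real N + 1))"
  have eta: "\<eta> > 0" using e unfolding \<eta>_def by simp
  have "\<forall>n. \<exists>\<delta>>0. \<forall>y\<in>X. s y n < \<delta> \<longrightarrow> u y n < \<eta>" using loc eta by blast
  then obtain df where df: "\<And>n. df n > 0" "\<And>n y. y\<in>X \<Longrightarrow> s y n < df n \<Longrightarrow> u y n < \<eta>"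
    by metis
  define \<delta> where "\<delta> = Min (insert (\<epsilon>/4) (df ` {..<N}))"
  have d0: "\<delta> > 0" unfolding \<delta>_def using e df(1) by (subst Min_gr_iff) auto
  have d1: "\<delta> \<le> \<epsilon>/4" unfolding \<delta>_def by (rule Min_le) auto
  have d2: "\<delta> \<le> df n" if "n < N" for n unfolding \<delta>_def using that by simp
  define c where "c n = (if n < N then \<eta> else 0)" for n
  have cs: "summable (\<lambda>n. c n powr p)" unfolding c_def
    by (rule summable_finite[of "{..<N}"]) auto
  have "(\<Sum>n. c n powr p) = (\<Sum>n<N. c n powr p)" unfolding c_def
    by (rule suminf_finite) auto
  also have "\<dots> = real N * \<eta> powr p" unfolding c_def by simp
  also have "\<dots> \<le> (real N + 1) * \<eta> powr p" by (intro mult_right_mono) auto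
  also have "\<dots> \<le> (real N + 1) powr p * \<eta> powr p"
  proof -
    have "(real N + 1) powr 1 \<le> (real N + 1) powr p" using p by (intro powr_mono) auto
    thus ?thesis by (intro mult_right_mono) auto
  qed
  also have "\<dots> = ((real N + 1) * \<eta>) powr p" using eta by (simp add: powr_mult)
  also have "(real N + 1) * \<eta> = \<epsilon>/4" unfolding \<eta>_def by (simp add: field_simps)
  finally have "(\<Sum>n. c n powr p) \<le> (\<epsilon>/4) powr p" .
  hence "pn p c \<le> ((\<epsilon>/4) powr p) powr (1/p)" unfolding pn_def using p e
    by (intro powr_mono2) (auto intro!: suminf_nonneg cs)
  hence ce: "pn p c \<le> \<epsilon>/4" using p e by (simp add: powr_powr)
  have "\<forall>y\<in>X. pn p (s y) < \<delta> \<longrightarrow> pn p (u y) < \<epsilon>"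
  proof (intro ballI impI)
    fix y assume y: "y \<in> X" and sy: "pn p (s y) < \<delta>"
    define h where "h n = (if n < N then u y n else 0)" for n
    define g where "g n = (if n < N then 0 else u y n)" for n
    have hnn: "0 \<le> h n" "0 \<le> g n" for n unfolding h_def g_def using unn[OF y] by auto
    have hc: "h n \<le> c n" for n
    proof (cases "n < N")
      case True
      have "s y n \<le> pn p (s y)" by (rule term_le_pn[OF p snn[OF y] ss[OF y]])
      hence "s y n < df n" using sy d2[OF True] by simp
      thus ?thesis using df(2)[OF y] True unfolding h_def c_def by force
    qed (simp add: h_def c_def)
    from lp_mono[OF p hnn(1) hc cs] ce have hs: "summable (\<lambda>n. h n powr p)" and he: "pn p h \<le> \<epsilon>/4"
      by auto
    from minkowski[OF p tNnn tNnn tNs tNs] obtain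
      k1: "summable (\<lambda>n. (tN n + tN n) powr p)" "pn p (\<lambda>n. tN n + tN n) \<le> pn p tN + pn p tN" by blast
    from minkowski[OF p _ snn[OF y] k1(1) ss[OF y]] tNnn obtain
      k2: "summable (\<lambda>n. (tN n + tN n + s y n) powr p)" "pn p (\<lambda>n. tN n + tN n + s y n) \<le> pn p (\<lambda>n. tN n + tN n) + pn p (s y)"
      by (metis add_nonneg_nonneg)
    have gk: "g n \<le> tN n + tN n + s y n" for n
      using tl[OF y, of n] snn[OF y, of n] t(1)[of n] unfolding g_def tN_def by auto
    from lp_mono[OF p hnn(2) gk k2(1)] have gs: "summable (\<lambda>n. g n powr p)" and
      ge: "pn p g \<le> pn p (\<lambda>n. tN n + tN n + s y n)" by auto
    have ue: "u y = (\<lambda>n. h n + g n)" unfolding h_def g_def by auto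
    from minkowski[OF p hnn hs gs] have "pn p (u y) \<le> pn p h + pn p g" unfolding ue by blast
    also have "\<dots> < \<epsilon>" using he ge k1(2) k2(2) tNe sy d1 e by linarith
    finally show "pn p (u y) < \<epsilon>" .
  qed
  thus ?thesis using d0 by blast
qed



locale lpG =
  fixes G :: "nat \<Rightarrow> ('a, 'b) monoid_scheme"
    and d :: "nat \<Rightarrow> 'a \<Rightarrow> 'a \<Rightarrow> real"
    and p :: real
  assumes metric: "\<And>n. Metric_space (carrier (G n)) (d n)"
    and left_inv: "\<And>n. left_invariant (G n) (d n)"
    and topgrp: "\<And>n. topological_group (G n) (Metric_space.mtopology (carrier (G n)) (d n))"
    and p: "1 \<le> p"
begin

lemma grp: "group (G n)" using topgrp[of n] unfolding topological_group_def by simp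

lemma one_c: "\<one>\<^bsub>G n\<^esub> \<in> carrier (G n)" using group.is_monoid[OF grp] by (simp add: monoid.one_closed)

lemma dnn[simp]: "0 \<le> d n x y" using Metric_space.nonneg[OF metric] .
lemma dcomm: "d n x y = d n y x" using Metric_space.commute[OF metric] .
lemma dtri: "x \<in> carrier (G n) \<Longrightarrow> y \<in> carrier (G n) \<Longrightarrow> z \<in> carrier (G n) \<Longrightarrow> d n x z \<le> d n x y + d n y z"
  using Metric_space.triangle[OF metric] .
lemma dzero: "x \<in> carrier (G n) \<Longrightarrow> y \<in> carrier (G n) \<Longrightarrow> d n x y = 0 \<longleftrightarrow> x = y"
  using Metric_space.zero[OF metric] .
lemma linv: "x \<in> carrier (G n) \<Longrightarrow> y \<in> carrier (G n) \<Longrightarrow> z \<in> carrier (G n) \<Longrightarrow>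
   d n (z \<otimes>\<^bsub>G n\<^esub> x) (z \<otimes>\<^bsub>G n\<^esub> y) = d n x y"
  using left_inv[of n] unfolding left_invariant_def by blast

lemma d_mult_right: "x \<in> carrier (G n) \<Longrightarrow> y \<in> carrier (G n) \<Longrightarrow>
   d n (x \<otimes>\<^bsub>G n\<^esub> y) x = d n y \<one>\<^bsub>G n\<^esub>"
  using linv[of y n "\<one>\<^bsub>G n\<^esub>" x] group.is_monoid[OF grp] by (simp add: monoid.r_one)

lemma d_inv: "x \<in> carrier (G n) \<Longrightarrow> d n (inv\<^bsub>G n\<^esub> x) \<one>\<^bsub>G n\<^esub> = d n x \<one>\<^bsub>G n\<^esub>"
  using linv[of "inv\<^bsub>G n\<^esub> x" n "\<one>\<^bsub>G n\<^esub>" x] grp[of n]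
  by (simp add: group.r_inv monoid.r_one group.is_monoid group.inv_closed one_c dcomm)

abbreviation "L \<equiv> lp_carrier G d p"
abbreviation "D \<equiv> lp_dist d p"

lemma D_pn: "D x y = pn p (\<lambda>n. d n (x n) (y n))"
  unfolding lp_dist_def pn_def by simp

lemma Lmem: "x \<in> L \<longleftrightarrow> (\<forall>n. x n \<in> carrier (G n)) \<and> summable (\<lambda>n. d n (x n) \<one>\<^bsub>G n\<^esub> powr p)"
  unfolding lp_carrier_def by simp

lemma Lc: "x \<in> L \<Longrightarrow> x n \<in> carrier (G n)" using Lmem by blast
lemma Ls: "x \<in> L \<Longrightarrow> summable (\<lambda>n. d n (x n) \<one>\<^bsub>G n\<^esub> powr p)" using Lmem by blast


lemma summ_dist: assumes "x \<in> L" "y \<in> L" shows "summable (\<lambda>n. d n (x n) (y n) powr p)"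
proof -
  from minkowski[OF p dnn dnn Ls[OF assms(1)] Ls[OF assms(2)]] have
    s: "summable (\<lambda>n. (d n (x n) \<one>\<^bsub>G n\<^esub> + d n (y n) \<one>\<^bsub>G n\<^esub>) powr p)" by blast
  have "d n (x n) (y n) \<le> d n (x n) \<one>\<^bsub>G n\<^esub> + d n (y n) \<one>\<^bsub>G n\<^esub>" for n
    using dtri[OF Lc[OF assms(1)] one_c Lc[OF assms(2)], of n] dcomm[of n "y n"] by simp
  from lp_mono[OF p dnn this s] show ?thesis by blast
qed

lemma metric_L: "Metric_space L D"
proof
  fix x y show "0 \<le> D x y" unfolding D_pn by (rule pn_nonneg)
  show "D x y = D y x" unfolding lp_dist_def by (simp add: dcomm)
next
  fix x y assume xy: "x \<in> L" "y \<in> L"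
  have "D x y = 0 \<longleftrightarrow> (\<forall>n. d n (x n) (y n) = 0)" unfolding D_pn
    by (rule pn_zero[OF p summ_dist[OF xy] dnn])
  also have "\<dots> \<longleftrightarrow> (\<forall>n. x n = y n)" using dzero[OF Lc[OF xy(1)] Lc[OF xy(2)]] by simp
  also have "\<dots> \<longleftrightarrow> x = y" by auto
  finally show "D x y = 0 \<longleftrightarrow> x = y" .
next
  fix x y z assume xyz: "x \<in> L" "y \<in> L" "z \<in> L"
  from minkowski[OF p dnn dnn summ_dist[OF xyz(1,2)] summ_dist[OF xyz(2,3)]] have
    s: "summable (\<lambda>n. (d n (x n) (y n) + d n (y n) (z n)) powr p)"
    and le1: "pn p (\<lambda>n. d n (x n) (y n) + d n (y n) (z n)) \<le> D x y + D y z" unfolding D_pn by blast+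
  have "d n (x n) (z n) \<le> d n (x n) (y n) + d n (y n) (z n)" for n
    using dtri[OF Lc[OF xyz(1)] Lc[OF xyz(2)] Lc[OF xyz(3)]] .
  from lp_mono[OF p dnn this s] le1 show "D x z \<le> D x y + D y z" unfolding D_pn by linarith
qed

lemma mult_closed: assumes "x \<in> L" "y \<in> L" shows "(\<lambda>n. x n \<otimes>\<^bsub>G n\<^esub> y n) \<in> L"
proof -
  from minkowski[OF p dnn dnn Ls[OF assms(2)] Ls[OF assms(1)]] have
    s: "summable (\<lambda>n. (d n (y n) \<one>\<^bsub>G n\<^esub> + d n (x n) \<one>\<^bsub>G n\<^esub>) powr p)" by blast
  have le: "d n (x n \<otimes>\<^bsub>G n\<^esub> y n) \<one>\<^bsub>G n\<^esub> \<le> d n (y n) \<one>\<^bsub>G n\<^esub> + d n (x n) \<one>\<^bsub>G n\<^esub>" for n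
    using dtri[OF group.is_monoid[OF grp, THEN monoid.m_closed, OF Lc[OF assms(1)] Lc[OF assms(2)]] Lc[OF assms(1)] one_c]
      d_mult_right[OF Lc[OF assms(1)] Lc[OF assms(2)]] by simp
  have c: "x n \<otimes>\<^bsub>G n\<^esub> y n \<in> carrier (G n)" for n
    using group.is_monoid[OF grp, THEN monoid.m_closed, OF Lc[OF assms(1)] Lc[OF assms(2)]] .
  from lp_mono[OF p dnn le s] c show ?thesis unfolding Lmem by blast
qed

lemma inv_closed: assumes "x \<in> L" shows "(\<lambda>n. inv\<^bsub>G n\<^esub> x n) \<in> L"
  using Ls[OF assms] Lc[OF assms] d_inv[OF Lc[OF assms]] group.inv_closed[OF grp] unfolding Lmem by simp

lemma one_L: "(\<lambda>n. \<one>\<^bsub>G n\<^esub>) \<in> L"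
  using one_c dzero[OF one_c one_c] p unfolding Lmem by simp

lemma carrier_lp[simp]: "carrier (lp_group G d p) = L" unfolding lp_group_def by simp
lemma mult_lp[simp]: "x \<otimes>\<^bsub>lp_group G d p\<^esub> y = (\<lambda>n. x n \<otimes>\<^bsub>G n\<^esub> y n)" unfolding lp_group_def by simp
lemma one_lp[simp]: "\<one>\<^bsub>lp_group G d p\<^esub> = (\<lambda>n. \<one>\<^bsub>G n\<^esub>)" unfolding lp_group_def by simp

lemma group_lp: "group (lp_group G d p)"
proof (rule groupI)
  fix x y z assume "x \<in> carrier (lp_group G d p)" "y \<in> carrier (lp_group G d p)" "z \<in> carrier (lp_group G d p)"
  thus "x \<otimes>\<^bsub>lp_group G d p\<^esub> y \<otimes>\<^bsub>lp_group G d p\<^esub> z = x \<otimes>\<^bsub>lp_group G d p\<^esub> (y \<otimes>\<^bsub>lp_group G d p\<^esub> z)"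
    using group.is_monoid[OF grp] by (auto intro!: ext monoid.m_assoc Lc)
next
  fix x y assume "x \<in> carrier (lp_group G d p)" "y \<in> carrier (lp_group G d p)"
  thus "x \<otimes>\<^bsub>lp_group G d p\<^esub> y \<in> carrier (lp_group G d p)" using mult_closed by simp
next
  show "\<one>\<^bsub>lp_group G d p\<^esub> \<in> carrier (lp_group G d p)" using one_L by simp
next
  fix x assume "x \<in> carrier (lp_group G d p)"
  thus "\<one>\<^bsub>lp_group G d p\<^esub> \<otimes>\<^bsub>lp_group G d p\<^esub> x = x"
    using group.is_monoid[OF grp] by (auto intro!: ext monoid.l_one Lc)
next
  fix x assume x: "x \<in> carrier (lp_group G d p)"
  show "\<exists>y\<in>carrier (lp_group G d p). y \<otimes>\<^bsub>lp_group G d p\<^esub> x = \<one>\<^bsub>lp_group G d p\<^esub>"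
    using x inv_closed Lc grp by (intro bexI[of _ "\<lambda>n. inv\<^bsub>G n\<^esub> x n"]) (auto intro!: ext group.l_inv)
qed

lemma inv_lp: assumes "x \<in> L" shows "inv\<^bsub>lp_group G d p\<^esub> x = (\<lambda>n. inv\<^bsub>G n\<^esub> x n)"
  using assms inv_closed[OF assms] Lc[OF assms] grp
  by (intro group.inv_equality[OF group_lp]) (auto intro!: ext group.l_inv)


abbreviation "T n \<equiv> Metric_space.mtopology (carrier (G n)) (d n)"

lemma rmul_loc: assumes a: "a \<in> carrier (G n)" and y: "y \<in> carrier (G n)" and e: "\<eta> > 0"
  shows "\<exists>\<delta>>0. \<forall>z. z \<in> carrier (G n) \<and> d n a z < \<delta> \<longrightarrow> d n (a \<otimes>\<^bsub>G n\<^esub> y) (z \<otimes>\<^bsub>G n\<^esub> y) < \<eta>"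
proof -
  have c: "continuous_map (prod_topology (T n) (T n)) (T n) (\<lambda>(x, y). x \<otimes>\<^bsub>G n\<^esub> y)"
    using topgrp[of n] unfolding topological_group_def by blast
  have yt: "y \<in> topspace (T n)" using y Metric_space.topspace_mtopology[OF metric] by simp
  have "continuous_map (T n) (prod_topology (T n) (T n)) (\<lambda>x. (x, y))"
    by (intro continuous_map_pairedI continuous_map_id[unfolded id_def] continuous_map_const[THEN iffD2] disjI2 yt)
  from continuous_map_compose[OF this c] have "continuous_map (T n) (T n) (\<lambda>x. x \<otimes>\<^bsub>G n\<^esub> y)"
    by (simp add: o_def)
  from Metric_space.metric_continuous_map[OF metric metric, THEN iffD1, OF this, THEN conjunct2]
  show ?thesis using a e by blast
qed

lemma inv_loc: assumes a: "a \<in> carrier (G n)" and e: "\<eta> > 0"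
  shows "\<exists>\<delta>>0. \<forall>z. z \<in> carrier (G n) \<and> d n a z < \<delta> \<longrightarrow> d n (inv\<^bsub>G n\<^esub> a) (inv\<^bsub>G n\<^esub> z) < \<eta>"
proof -
  have "continuous_map (T n) (T n) (\<lambda>x. inv\<^bsub>G n\<^esub> x)"
    using topgrp[of n] unfolding topological_group_def by blast
  from Metric_space.metric_continuous_map[OF metric metric, THEN iffD1, OF this, THEN conjunct2]
  show ?thesis using a e by blast
qed

lemma mc: "x \<in> carrier (G n) \<Longrightarrow> y \<in> carrier (G n) \<Longrightarrow> x \<otimes>\<^bsub>G n\<^esub> y \<in> carrier (G n)"
  using group.is_monoid[OF grp] by (simp add: monoid.m_closed)

lemma rmul_lp: assumes a: "a \<in> L" and y: "y \<in> L" and e: "\<epsilon> > 0"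
  shows "\<exists>\<delta>>0. \<forall>x\<in>L. D a x < \<delta> \<longrightarrow> D (\<lambda>n. a n \<otimes>\<^bsub>G n\<^esub> y n) (\<lambda>n. x n \<otimes>\<^bsub>G n\<^esub> y n) < \<epsilon>"
  unfolding D_pn
proof (rule lp_cont_generic[OF p, where X=L and t = "\<lambda>n. d n (y n) \<one>\<^bsub>G n\<^esub>"])
  show "summable (\<lambda>n. d n (y n) \<one>\<^bsub>G n\<^esub> powr p)" by (rule Ls[OF y])
  show "\<And>x. x \<in> L \<Longrightarrow> summable (\<lambda>n. d n (a n) (x n) powr p)" using summ_dist a by blast
  show "\<epsilon> > 0" by (rule e)
next
  fix n :: nat and \<eta> :: real assume "\<eta> > 0"
  from rmul_loc[OF Lc[OF a] Lc[OF y] this] obtain \<delta> where "\<delta> > 0"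
    "\<forall>z. z \<in> carrier (G n) \<and> d n (a n) z < \<delta> \<longrightarrow> d n (a n \<otimes>\<^bsub>G n\<^esub> y n) (z \<otimes>\<^bsub>G n\<^esub> y n) < \<eta>" by blast
  thus "\<exists>\<delta>>0. \<forall>x\<in>L. d n (a n) (x n) < \<delta> \<longrightarrow> d n (a n \<otimes>\<^bsub>G n\<^esub> y n) (x n \<otimes>\<^bsub>G n\<^esub> y n) < \<eta>"
    using Lc by blast
next
  fix x n assume x: "x \<in> L"
  have an: "a n \<in> carrier (G n)" and yn: "y n \<in> carrier (G n)" and xn: "x n \<in> carrier (G n)"
    using Lc a y x by auto
  have "d n (a n \<otimes>\<^bsub>G n\<^esub> y n) (x n \<otimes>\<^bsub>G n\<^esub> y n) \<le> d n (a n \<otimes>\<^bsub>G n\<^esub> y n) (a n) + d n (a n) (x n \<otimes>\<^bsub>G n\<^esub> y n)"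
    by (rule dtri[OF mc[OF an yn] an mc[OF xn yn]])
  moreover have "d n (a n) (x n \<otimes>\<^bsub>G n\<^esub> y n) \<le> d n (a n) (x n) + d n (x n) (x n \<otimes>\<^bsub>G n\<^esub> y n)"
    by (rule dtri[OF an xn mc[OF xn yn]])
  moreover have "d n (a n \<otimes>\<^bsub>G n\<^esub> y n) (a n) = d n (y n) \<one>\<^bsub>G n\<^esub>" by (rule d_mult_right[OF an yn])
  moreover have "d n (x n) (x n \<otimes>\<^bsub>G n\<^esub> y n) = d n (y n) \<one>\<^bsub>G n\<^esub>" using d_mult_right[OF xn yn] dcomm by metis
  ultimately show "d n (a n \<otimes>\<^bsub>G n\<^esub> y n) (x n \<otimes>\<^bsub>G n\<^esub> y n) \<le> 2 * d n (y n) \<one>\<^bsub>G n\<^esub> + d n (a n) (x n)"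
    by linarith
qed auto

lemma D_left: assumes "a \<in> L" "b \<in> L" "y \<in> L"
  shows "D (\<lambda>n. a n \<otimes>\<^bsub>G n\<^esub> b n) (\<lambda>n. a n \<otimes>\<^bsub>G n\<^esub> y n) = D b y"
  unfolding lp_dist_def using linv Lc assms by simp

lemma mul_lp: assumes a: "a \<in> L" and b: "b \<in> L" and e: "\<epsilon> > 0"
  shows "\<exists>\<delta>>0. \<forall>x\<in>L. \<forall>y\<in>L. D a x < \<delta> \<longrightarrow> D b y < \<delta> \<longrightarrow>
     D (\<lambda>n. a n \<otimes>\<^bsub>G n\<^esub> b n) (\<lambda>n. x n \<otimes>\<^bsub>G n\<^esub> y n) < \<epsilon>"
proof -
  interpret M: Metric_space L D by (rule metric_L)
  obtain \<delta>1 where d1: "\<delta>1 > 0" "\<forall>x\<in>L. D a x < \<delta>1 \<longrightarrow> D (\<lambda>n. a n \<otimes>\<^bsub>G n\<^esub> b n) (\<lambda>n. x n \<otimes>\<^bsub>G n\<^esub> b n) < \<epsilon>/2"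
    using rmul_lp[OF a b, of "\<epsilon>/2"] e by auto
  define \<delta> where "\<delta> = min \<delta>1 (\<epsilon>/6)"
  have "\<forall>x\<in>L. \<forall>y\<in>L. D a x < \<delta> \<longrightarrow> D b y < \<delta> \<longrightarrow>
     D (\<lambda>n. a n \<otimes>\<^bsub>G n\<^esub> b n) (\<lambda>n. x n \<otimes>\<^bsub>G n\<^esub> y n) < \<epsilon>"
  proof (intro ballI impI)
    fix x y assume x: "x \<in> L" and y: "y \<in> L" and ax: "D a x < \<delta>" and byy: "D b y < \<delta>"
    let ?ab = "\<lambda>n. a n \<otimes>\<^bsub>G n\<^esub> b n" and ?ay = "\<lambda>n. a n \<otimes>\<^bsub>G n\<^esub> y n"
      and ?xb = "\<lambda>n. x n \<otimes>\<^bsub>G n\<^esub> b n" and ?xy = "\<lambda>n. x n \<otimes>\<^bsub>G n\<^esub> y n"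
    have m: "?ab \<in> L" "?ay \<in> L" "?xb \<in> L" "?xy \<in> L" using mult_closed a b x y by auto
    have "D ?ab ?xy \<le> D ?ab ?ay + D ?ay ?xy" using M.triangle m by blast
    moreover have "D ?ay ?xy \<le> D ?ay ?xb + D ?xb ?xy" using M.triangle m by blast
    moreover have "D ?ay ?xb \<le> D ?ay ?ab + D ?ab ?xb" using M.triangle m by blast
    moreover have "D ?ab ?ay = D b y" by (rule D_left[OF a b y])
    moreover have "D ?ay ?ab = D b y" using D_left[OF a b y] M.commute by metis
    moreover have "D ?xb ?xy = D b y" by (rule D_left[OF x b y])
    moreover have "D ?ab ?xb < \<epsilon>/2" using d1 x ax unfolding \<delta>_def by auto
    ultimately show "D ?ab ?xy < \<epsilon>" using byy unfolding \<delta>_def by linarith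
  qed
  moreover have "\<delta> > 0" using d1 e unfolding \<delta>_def by simp
  ultimately show ?thesis by blast
qed

lemma inv_lp_cont: assumes a: "a \<in> L" and e: "\<epsilon> > 0"
  shows "\<exists>\<delta>>0. \<forall>x\<in>L. D a x < \<delta> \<longrightarrow> D (\<lambda>n. inv\<^bsub>G n\<^esub> a n) (\<lambda>n. inv\<^bsub>G n\<^esub> x n) < \<epsilon>"
  unfolding D_pn
proof (rule lp_cont_generic[OF p, where X=L and t = "\<lambda>n. d n (a n) \<one>\<^bsub>G n\<^esub>"])
  show "summable (\<lambda>n. d n (a n) \<one>\<^bsub>G n\<^esub> powr p)" by (rule Ls[OF a])
  show "\<And>x. x \<in> L \<Longrightarrow> summable (\<lambda>n. d n (a n) (x n) powr p)" using summ_dist a by blast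
  show "\<epsilon> > 0" by (rule e)
next
  fix n :: nat and \<eta> :: real assume "\<eta> > 0"
  from inv_loc[OF Lc[OF a] this] obtain \<delta> where "\<delta> > 0"
    "\<forall>z. z \<in> carrier (G n) \<and> d n (a n) z < \<delta> \<longrightarrow> d n (inv\<^bsub>G n\<^esub> a n) (inv\<^bsub>G n\<^esub> z) < \<eta>" by blast
  thus "\<exists>\<delta>>0. \<forall>x\<in>L. d n (a n) (x n) < \<delta> \<longrightarrow> d n (inv\<^bsub>G n\<^esub> a n) (inv\<^bsub>G n\<^esub> x n) < \<eta>"
    using Lc by blast
next
  fix x n assume x: "x \<in> L"
  have an: "a n \<in> carrier (G n)" and xn: "x n \<in> carrier (G n)"
    using Lc a x by auto
  have ia: "inv\<^bsub>G n\<^esub> a n \<in> carrier (G n)" and ix: "inv\<^bsub>G n\<^esub> x n \<in> carrier (G n)"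
    using group.inv_closed[OF grp] an xn by auto
  have "d n (inv\<^bsub>G n\<^esub> a n) (inv\<^bsub>G n\<^esub> x n) \<le> d n (inv\<^bsub>G n\<^esub> a n) \<one>\<^bsub>G n\<^esub> + d n \<one>\<^bsub>G n\<^esub> (inv\<^bsub>G n\<^esub> x n)"
    by (rule dtri[OF ia one_c ix])
  moreover have "d n (x n) \<one>\<^bsub>G n\<^esub> \<le> d n (x n) (a n) + d n (a n) \<one>\<^bsub>G n\<^esub>" by (rule dtri[OF xn an one_c])
  moreover have "d n \<one>\<^bsub>G n\<^esub> (inv\<^bsub>G n\<^esub> x n) = d n (x n) \<one>\<^bsub>G n\<^esub>" using d_inv[OF xn] dcomm by metis
  moreover have "d n (inv\<^bsub>G n\<^esub> a n) \<one>\<^bsub>G n\<^esub> = d n (a n) \<one>\<^bsub>G n\<^esub>" by (rule d_inv[OF an])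
  moreover have "d n (x n) (a n) = d n (a n) (x n)" by (rule dcomm)
  ultimately show "d n (inv\<^bsub>G n\<^esub> a n) (inv\<^bsub>G n\<^esub> x n) \<le> 2 * d n (a n) \<one>\<^bsub>G n\<^esub> + d n (a n) (x n)"
    by linarith
qed auto

lemma topgrp_lp: "topological_group (lp_group G d p) (Metric_space.mtopology (carrier (lp_group G d p)) (lp_dist d p))"
proof -
  interpret M: Metric_space L D by (rule metric_L)
  have M12: "Metric_space12 L D L D" by (simp add: Metric_space12_def metric_L)
  have PT: "prod_topology M.mtopology M.mtopology = Metric_space.mtopology (L \<times> L) (prod_dist D D)"
    using Metric_space12.mtopology_prod_metric[OF M12] by simp
  have cm: "continuous_map (prod_topology M.mtopology M.mtopology) M.mtopology
      (\<lambda>(x, y). \<lambda>n. x n \<otimes>\<^bsub>G n\<^esub> y n)"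
    unfolding PT Metric_space.metric_continuous_map[OF Metric_space12.prod_metric[OF M12] metric_L]
  proof (intro conjI ballI allI impI)
    show "(\<lambda>(x, y). \<lambda>n. x n \<otimes>\<^bsub>G n\<^esub> y n) ` (L \<times> L) \<subseteq> L" using mult_closed by auto
  next
    fix ab :: "(nat \<Rightarrow> 'a) \<times> (nat \<Rightarrow> 'a)" and \<epsilon> :: real assume ab: "ab \<in> L \<times> L" and e: "\<epsilon> > 0"
    obtain a b where abe: "ab = (a, b)" by force
    with ab have a: "a \<in> L" and b: "b \<in> L" by auto
    from mul_lp[OF a b e] obtain \<delta> where d: "\<delta> > 0" "\<forall>x\<in>L. \<forall>y\<in>L. D a x < \<delta> \<longrightarrow> D b y < \<delta> \<longrightarrow>
     D (\<lambda>n. a n \<otimes>\<^bsub>G n\<^esub> b n) (\<lambda>n. x n \<otimes>\<^bsub>G n\<^esub> y n) < \<epsilon>" by blast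
    show "\<exists>\<delta>>0. \<forall>xy. xy \<in> L \<times> L \<and> prod_dist D D ab xy < \<delta> \<longrightarrow>
       D ((\<lambda>(x, y). \<lambda>n. x n \<otimes>\<^bsub>G n\<^esub> y n) ab) ((\<lambda>(x, y). \<lambda>n. x n \<otimes>\<^bsub>G n\<^esub> y n) xy) < \<epsilon>"
    proof (intro exI[of _ \<delta>] conjI allI impI)
      fix xy assume xy: "xy \<in> L \<times> L \<and> prod_dist D D ab xy < \<delta>"
      obtain x y where xye: "xy = (x, y)" by force
      have "D a x \<le> prod_dist D D (a, b) (x, y)" "D b y \<le> prod_dist D D (a, b) (x, y)"
        using Metric_space12.component_le_prod_metric[OF M12] by auto
      thus "D ((\<lambda>(x, y). \<lambda>n. x n \<otimes>\<^bsub>G n\<^esub> y n) ab) ((\<lambda>(x, y). \<lambda>n. x n \<otimes>\<^bsub>G n\<^esub> y n) xy) < \<epsilon>"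
        using d(2) xy unfolding abe xye by auto
    qed (rule d(1))
  qed
  have ci: "continuous_map M.mtopology M.mtopology (\<lambda>x. inv\<^bsub>lp_group G d p\<^esub> x)"
    unfolding M.metric_continuous_map[OF metric_L]
  proof (intro conjI ballI allI impI)
    show "(\<lambda>x. inv\<^bsub>lp_group G d p\<^esub> x) ` L \<subseteq> L" using inv_lp inv_closed by auto
  next
    fix a :: "nat \<Rightarrow> 'a" and \<epsilon> :: real assume a: "a \<in> L" and e: "\<epsilon> > 0"
    from inv_lp_cont[OF a e] obtain \<delta> where "\<delta> > 0"
      "\<forall>x\<in>L. D a x < \<delta> \<longrightarrow> D (\<lambda>n. inv\<^bsub>G n\<^esub> a n) (\<lambda>n. inv\<^bsub>G n\<^esub> x n) < \<epsilon>" by blast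
    thus "\<exists>\<delta>>0. \<forall>x. x \<in> L \<and> D a x < \<delta> \<longrightarrow> D (inv\<^bsub>lp_group G d p\<^esub> a) (inv\<^bsub>lp_group G d p\<^esub> x) < \<epsilon>"
      using inv_lp a by auto
  qed
  have eqm: "(\<lambda>(x, y). x \<otimes>\<^bsub>lp_group G d p\<^esub> y) = (\<lambda>(x, y). \<lambda>n. x n \<otimes>\<^bsub>G n\<^esub> y n)"
    by (simp add: fun_eq_iff)
  show ?thesis unfolding topological_group_def eqm using group_lp cm ci by simp
qed

end

theorem mainTheorem16:
  fixes G :: "nat \<Rightarrow> ('a, 'b) monoid_scheme"
    and d :: "nat \<Rightarrow> 'a \<Rightarrow> 'a \<Rightarrow> real"
    and p :: real
  assumes metric: "\<And>n. Metric_space (carrier (G n)) (d n)"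
    and left_inv: "\<And>n. left_invariant (G n) (d n)"
    and topgrp: "\<And>n. topological_group (G n) (Metric_space.mtopology (carrier (G n)) (d n))"
    and p: "1 \<le> p"
  shows "Metric_space (carrier (lp_group G d p)) (lp_dist d p) \<and>
         topological_group (lp_group G d p)
           (Metric_space.mtopology (carrier (lp_group G d p)) (lp_dist d p))"
proof -
  interpret lpG G d p by (rule lpG.intro[OF metric left_inv topgrp p])
  show ?thesis using metric_L topgrp_lp by simp
qed

end
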